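(* Let $n\geq 1$ be an integer, let $\mathbb{D}:=\{z\in\mathbb{C}:|z|<1\}$ and $\mathbb{B}_n:=\{(z_1,\dots,z_n)\in\mathbb{C}^n: |z_1|^2+\cdots+|z_n|^2<1\}$, and let $X$ denote either $\mathbb{D}^n$ or $\mathbb{B}_n$. Let $R_n$ be a commutative unital subring of the ring $\mathbb{C}^{X}$ of all complex-valued functions on $X$, with the usual pointwise addition and multiplication. For $f\in R_n$ define the function $Df:\mathbb{D}\to\mathbb{C}$ by $(Df)(z_1):=f(z_1,0,\dots,0)$, and set $DR_n:=\{Df: f\in R_n\}$ (a ring of functions on $\mathbb{D}$ under pointwise operations). For $g\in DR_n$ define $Ug:X\to\mathbb{C}$ by $(Ug)(z_1,\dots,z_n):=g(z_1)$. Suppose that $UDf\in R_n$ for all $f\in R_n$. If $R_n$ is coherent, then $DR_n$ is coherent.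
   Context: A unital commutative ring $R$ is called coherent if the intersection of any two finitely generated ideals of $R$ is finitely generated, and for every $a\in R$ the annihilator $\mathrm{Ann}(a):=\{x\in R: ax=0\}$ is a finitely generated ideal. *)

theory Defs
  imports "HOL-Algebra.Algebra" "HOL-Library.FuncSet"
begin

text \<open>Points of C^n are modelled as functions nat => complex vanishing at indices >= n
  (coordinate z_{i+1} is z i).\<close>

definition polydisc :: "nat \<Rightarrow> (nat \<Rightarrow> complex) set" where
  "polydisc n = {z. (\<forall>i<n. cmod (z i) < 1) \<and> (\<forall>i\<ge>n. z i = 0)}"

definition unit_ball_n :: "nat \<Rightarrow> (nat \<Rightarrow> complex) set" where
  "unit_ball_n n = {z. (\<Sum>i<n. (cmod (z i))^2) < 1 \<and> (\<forall>i\<ge>n. z i = 0)}"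

definition unit_disc :: "complex set" where
  "unit_disc = {z. cmod z < 1}"

definition func_ring :: "'a set \<Rightarrow> ('a \<Rightarrow> complex) ring" where
  "func_ring Xn = \<lparr>carrier = extensional Xn,
      monoid.mult = (\<lambda>f g. restrict (\<lambda>x. f x * g x) Xn),
      monoid.one = restrict (\<lambda>x. 1) Xn,
      ring.zero = restrict (\<lambda>x. 0) Xn,
      ring.add = (\<lambda>f g. restrict (\<lambda>x. f x + g x) Xn)\<rparr>"

definition Dmap :: "((nat \<Rightarrow> complex) \<Rightarrow> complex) \<Rightarrow> complex \<Rightarrow> complex" where
  "Dmap f = restrict (\<lambda>w. f (\<lambda>i. if i = 0 then w else 0)) unit_disc"

definition Umap :: "(nat \<Rightarrow> complex) set \<Rightarrow> (complex \<Rightarrow> complex) \<Rightarrow> (nat \<Rightarrow> complex) \<Rightarrow> complex" where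
  "Umap Xn g = restrict (\<lambda>z. g (z 0)) Xn"

definition fg_ideal :: "('a, 'b) ring_scheme \<Rightarrow> 'a set \<Rightarrow> bool" where
  "fg_ideal R I \<longleftrightarrow> ideal I R \<and> (\<exists>S. finite S \<and> S \<subseteq> carrier R \<and> I = genideal R S)"

definition coherent_ring :: "('a, 'b) ring_scheme \<Rightarrow> bool" where
  "coherent_ring R \<longleftrightarrow> cring R \<and>
     (\<forall>I J. fg_ideal R I \<and> fg_ideal R J \<longrightarrow> fg_ideal R (I \<inter> J)) \<and>
     (\<forall>a\<in>carrier R. fg_ideal R {x \<in> carrier R. a \<otimes>\<^bsub>R\<^esub> x = \<zero>\<^bsub>R\<^esub>})"

end

theory Submission
  imports Defs
begin

lemma img_ideal:
  assumes hr: "ring_hom_ring A B h" and surj: "h ` carrier A = carrier B"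
    and I: "ideal I A"
  shows "ideal (h ` I) B"
proof -
  interpret ring_hom_ring A B h by fact
  show ?thesis
  proof (rule idealI)
    show "ring B" by (rule S.ring_axioms)
    show "subgroup (h ` I) (add_monoid B)"
      by (rule img_is_add_subgroup[OF additive_subgroup.a_subgroup[OF ideal.axioms(1)[OF I]]])
  next
    fix a x assume a: "a \<in> h ` I" and x: "x \<in> carrier B"
    from a obtain i where i: "i \<in> I" "a = h i" by (rule imageE) simp
    have xx: "x \<in> h ` carrier A" using x surj by simp
    from xx obtain y where y: "x = h y" "y \<in> carrier A" by (rule imageE) simp
    have iA: "i \<in> carrier A" by (rule ideal.Icarr[OF I i(1)])
    have "x \<otimes>\<^bsub>B\<^esub> a = h (y \<otimes>\<^bsub>A\<^esub> i)" using hom_mult[OF y(2) iA] i(2) y(1) by simp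
    moreover have "y \<otimes>\<^bsub>A\<^esub> i \<in> I" by (rule ideal.I_l_closed[OF I i(1) y(2)])
    ultimately show "x \<otimes>\<^bsub>B\<^esub> a \<in> h ` I" by (rule image_eqI)
    have "a \<otimes>\<^bsub>B\<^esub> x = h (i \<otimes>\<^bsub>A\<^esub> y)" using hom_mult[OF iA y(2)] i(2) y(1) by simp
    moreover have "i \<otimes>\<^bsub>A\<^esub> y \<in> I" by (rule ideal.I_r_closed[OF I i(1) y(2)])
    ultimately show "a \<otimes>\<^bsub>B\<^esub> x \<in> h ` I" by (rule image_eqI)
  qed
qed

lemma img_genideal:
  assumes hr: "ring_hom_ring A B h" and surj: "h ` carrier A = carrier B"
    and S: "S \<subseteq> carrier A"
  shows "h ` genideal A S = genideal B (h ` S)"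
proof
  interpret ring_hom_ring A B h by fact
  have hS: "h ` S \<subseteq> carrier B" using S by auto
  have i1: "ideal {r \<in> carrier A. h r \<in> genideal B (h ` S)} A"
    by (rule ideal_vimage[OF S.genideal_ideal[OF hS]])
  have i2: "S \<subseteq> {r \<in> carrier A. h r \<in> genideal B (h ` S)}"
    using S S.genideal_self[OF hS] by auto
  have "genideal A S \<subseteq> {r \<in> carrier A. h r \<in> genideal B (h ` S)}"
    by (rule R.genideal_minimal[OF i1 i2])
  then show "h ` genideal A S \<subseteq> genideal B (h ` S)" by blast
  have j1: "ideal (h ` genideal A S) B" using img_ideal[OF hr surj R.genideal_ideal[OF S]] .
  have j2: "h ` S \<subseteq> h ` genideal A S" using R.genideal_self[OF S] by (rule image_mono)
  show "genideal B (h ` S) \<subseteq> h ` genideal A S" by (rule S.genideal_minimal[OF j1 j2])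
qed

lemma img_fg:
  assumes hr: "ring_hom_ring A B h" and surj: "h ` carrier A = carrier B"
    and I: "fg_ideal A I"
  shows "fg_ideal B (h ` I)"
proof -
  interpret ring_hom_ring A B h by fact
  obtain S where S: "finite S" "S \<subseteq> carrier A" "I = genideal A S" using I unfolding fg_ideal_def by blast
  have "h ` I = genideal B (h ` S)" using img_genideal[OF hr surj S(2)] S(3) by simp
  moreover have "ideal (h ` I) B" using img_ideal[OF hr surj] I unfolding fg_ideal_def by blast
  moreover have "finite (h ` S)" using S(1) by simp
  moreover have "h ` S \<subseteq> carrier B" using S(2) by auto
  ultimately show ?thesis unfolding fg_ideal_def by blast
qed

lemma retract_coherent:
  assumes A: "coherent_ring A" and B: "cring B"
    and h: "h \<in> ring_hom A B" and U: "U \<in> ring_hom B A"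
    and hU: "\<And>b. b \<in> carrier B \<Longrightarrow> h (U b) = b"
  shows "coherent_ring B"
proof -
  have cA: "cring A" using A unfolding coherent_ring_def by blast
  interpret A: cring A by fact
  interpret B: cring B by fact
  have hr: "ring_hom_ring A B h" using ring_hom_ringI2[OF A.ring_axioms B.ring_axioms h] .
  have Ur: "ring_hom_ring B A U" using ring_hom_ringI2[OF B.ring_axioms A.ring_axioms U] .
  interpret H: ring_hom_ring A B h by fact
  interpret UU: ring_hom_ring B A U by fact
  have surj: "h ` carrier A = carrier B"
  proof
    show "h ` carrier A \<subseteq> carrier B" by auto
    show "carrier B \<subseteq> h ` carrier A"
    proof
      fix b assume b: "b \<in> carrier B"
      then have "h (U b) = b" by (rule hU)
      moreover have "U b \<in> carrier A" using b by simp
      ultimately show "b \<in> h ` carrier A" by (rule image_eqI[OF sym])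
    qed
  qed
  have ext: "h ` genideal A (U ` S) = genideal B S" if S: "S \<subseteq> carrier B" for S
  proof -
    have US: "U ` S \<subseteq> carrier A" using S by auto
    have "h ` genideal A (U ` S) = genideal B (h ` U ` S)"
      using img_genideal[OF hr surj US] .
    moreover have "h ` U ` S = S"
    proof -
      have "h ` U ` S = (\<lambda>b. h (U b)) ` S" by (simp add: image_image)
      also have "\<dots> = (\<lambda>b. b) ` S" using S hU by (intro image_cong) auto
      finally show ?thesis by simp
    qed
    ultimately show ?thesis by simp
  qed
  have lift: "U x \<in> genideal A (U ` S)" if S: "S \<subseteq> carrier B" and x: "x \<in> genideal B S" for S x
  proof -
    have US: "U ` S \<subseteq> carrier A" using S by auto
    have "ideal {r \<in> carrier B. U r \<in> genideal A (U ` S)} B"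
      using UU.ideal_vimage A.genideal_ideal[OF US] by blast
    moreover have "S \<subseteq> {r \<in> carrier B. U r \<in> genideal A (U ` S)}"
      using S A.genideal_self[OF US] by auto
    ultimately have "genideal B S \<subseteq> {r \<in> carrier B. U r \<in> genideal A (U ` S)}"
      using B.genideal_minimal by blast
    then show ?thesis using x by blast
  qed
  have inter: "fg_ideal B (I \<inter> J)" if I: "fg_ideal B I" and J: "fg_ideal B J" for I J
  proof -
    obtain S where S: "finite S" "S \<subseteq> carrier B" "I = genideal B S" using I unfolding fg_ideal_def by blast
    obtain T where T: "finite T" "T \<subseteq> carrier B" "J = genideal B T" using J unfolding fg_ideal_def by blast
    let ?I = "genideal A (U ` S)" and ?J = "genideal A (U ` T)"
    have US: "U ` S \<subseteq> carrier A" and UT: "U ` T \<subseteq> carrier A" using S T by auto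
    have "fg_ideal A ?I" unfolding fg_ideal_def using A.genideal_ideal[OF US] US finite_imageI[OF S(1)] by blast
    moreover have "fg_ideal A ?J" unfolding fg_ideal_def using A.genideal_ideal[OF UT] UT finite_imageI[OF T(1)] by blast
    ultimately have "fg_ideal A (?I \<inter> ?J)" using A unfolding coherent_ring_def by blast
    then have fg: "fg_ideal B (h ` (?I \<inter> ?J))" by (rule img_fg[OF hr surj])
    have "h ` (?I \<inter> ?J) = I \<inter> J"
    proof
      have "h ` (?I \<inter> ?J) \<subseteq> h ` ?I \<inter> h ` ?J" by (rule image_Int_subset)
      also have "\<dots> = I \<inter> J" using ext[OF S(2)] ext[OF T(2)] S(3) T(3) by simp
      finally show "h ` (?I \<inter> ?J) \<subseteq> I \<inter> J" .
      show "I \<inter> J \<subseteq> h ` (?I \<inter> ?J)"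
      proof
        fix x assume x: "x \<in> I \<inter> J"
        have "ideal I B" using I unfolding fg_ideal_def by blast
        then have xc: "x \<in> carrier B" using x by (meson IntD1 ideal.Icarr)
        have "U x \<in> ?I" using lift[OF S(2)] x S(3) by simp
        moreover have "U x \<in> ?J" using lift[OF T(2)] x T(3) by simp
        ultimately have "U x \<in> ?I \<inter> ?J" by blast
        then show "x \<in> h ` (?I \<inter> ?J)" by (rule image_eqI[where f=h, OF hU[OF xc, symmetric]])
      qed
    qed
    then show ?thesis using fg by simp
  qed
  have ann: "fg_ideal B {x \<in> carrier B. a \<otimes>\<^bsub>B\<^esub> x = \<zero>\<^bsub>B\<^esub>}" if a: "a \<in> carrier B" for a
  proof -
    have Ua: "U a \<in> carrier A" using a by simp
    have "fg_ideal A {x \<in> carrier A. U a \<otimes>\<^bsub>A\<^esub> x = \<zero>\<^bsub>A\<^esub>}" using A Ua unfolding coherent_ring_def by blast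
    then have fg: "fg_ideal B (h ` {x \<in> carrier A. U a \<otimes>\<^bsub>A\<^esub> x = \<zero>\<^bsub>A\<^esub>})" by (rule img_fg[OF hr surj])
    have "h ` {x \<in> carrier A. U a \<otimes>\<^bsub>A\<^esub> x = \<zero>\<^bsub>A\<^esub>} = {x \<in> carrier B. a \<otimes>\<^bsub>B\<^esub> x = \<zero>\<^bsub>B\<^esub>}"
    proof
      show "h ` {x \<in> carrier A. U a \<otimes>\<^bsub>A\<^esub> x = \<zero>\<^bsub>A\<^esub>} \<subseteq> {x \<in> carrier B. a \<otimes>\<^bsub>B\<^esub> x = \<zero>\<^bsub>B\<^esub>}"
      proof clarify
        fix x assume x: "x \<in> carrier A" "U a \<otimes>\<^bsub>A\<^esub> x = \<zero>\<^bsub>A\<^esub>"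
        have "h (U a \<otimes>\<^bsub>A\<^esub> x) = h (U a) \<otimes>\<^bsub>B\<^esub> h x" using x(1) Ua by simp
        then have "h (U a \<otimes>\<^bsub>A\<^esub> x) = a \<otimes>\<^bsub>B\<^esub> h x" using hU[OF a] by simp
        moreover have "h (U a \<otimes>\<^bsub>A\<^esub> x) = \<zero>\<^bsub>B\<^esub>" using x(2) by simp
        ultimately show "h x \<in> carrier B \<and> a \<otimes>\<^bsub>B\<^esub> h x = \<zero>\<^bsub>B\<^esub>" using x by simp
      qed
      show "{x \<in> carrier B. a \<otimes>\<^bsub>B\<^esub> x = \<zero>\<^bsub>B\<^esub>} \<subseteq> h ` {x \<in> carrier A. U a \<otimes>\<^bsub>A\<^esub> x = \<zero>\<^bsub>A\<^esub>}"
      proof clarify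
        fix x assume x: "x \<in> carrier B" "a \<otimes>\<^bsub>B\<^esub> x = \<zero>\<^bsub>B\<^esub>"
        have "U a \<otimes>\<^bsub>A\<^esub> U x = U (a \<otimes>\<^bsub>B\<^esub> x)" using x(1) a by simp
        then have z: "U a \<otimes>\<^bsub>A\<^esub> U x = \<zero>\<^bsub>A\<^esub>" using x by simp
        have c: "U x \<in> carrier A" using x by simp
        have "U x \<in> {x \<in> carrier A. U a \<otimes>\<^bsub>A\<^esub> x = \<zero>\<^bsub>A\<^esub>}" using z c by simp
        then show "x \<in> h ` {x \<in> carrier A. U a \<otimes>\<^bsub>A\<^esub> x = \<zero>\<^bsub>A\<^esub>}"
          by (rule image_eqI[where f=h, OF hU[OF x(1), symmetric]])
      qed
    qed
    then show ?thesis using fg by simp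
  qed
  show ?thesis unfolding coherent_ring_def
    using B inter ann by (intro conjI allI impI ballI) auto
qed

lemma func_ring_cring: "cring (func_ring Y)"
proof (rule cringI)
  show "abelian_group (func_ring Y)"
  proof (rule abelian_groupI)
    fix x assume x: "x \<in> carrier (func_ring Y)"
    show "\<exists>y\<in>carrier (func_ring Y). y \<oplus>\<^bsub>func_ring Y\<^esub> x = \<zero>\<^bsub>func_ring Y\<^esub>"
      by (rule bexI[of _ "restrict (\<lambda>z. - x z) Y"]) (auto simp: func_ring_def fun_eq_iff restrict_def extensional_def)
  qed (auto simp: func_ring_def fun_eq_iff restrict_def extensional_def)
  show "comm_monoid (func_ring Y)"
    by (rule comm_monoidI) (auto simp: func_ring_def fun_eq_iff restrict_def extensional_def)
qed (auto simp: func_ring_def fun_eq_iff restrict_def extensional_def algebra_simps)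

lemma e_in:
  assumes "n \<ge> 1" "Xn = polydisc n \<or> Xn = unit_ball_n n" "w \<in> unit_disc"
  shows "(\<lambda>i. if i = 0 then w else 0) \<in> Xn"
proof -
  have s: "(\<Sum>i<n. (cmod (if i = 0 then w else 0))^2) = (cmod w)^2"
  proof -
    have "(\<Sum>i<n. (cmod (if i = 0 then w else 0))^2) = (\<Sum>i<n. if i = 0 then (cmod w)^2 else 0)"
      by (rule sum.cong) auto
    also have "\<dots> = (cmod w)^2" using assms(1) by (simp add: sum.delta)
    finally show ?thesis .
  qed
  have w1: "cmod w < 1" using assms(3) by (simp add: unit_disc_def)
  then have "(cmod w)^2 < 1" by (simp add: abs_square_less_1)
  then show ?thesis using assms w1 s by (auto simp: polydisc_def unit_ball_n_def)
qed

lemma z0_in: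
  assumes "n \<ge> 1" "Xn = polydisc n \<or> Xn = unit_ball_n n" "z \<in> Xn"
  shows "z 0 \<in> unit_disc"
  using assms(2)
proof
  assume "Xn = polydisc n" then show ?thesis using assms by (auto simp: polydisc_def unit_disc_def)
next
  assume X: "Xn = unit_ball_n n"
  have "(cmod (z 0))^2 \<le> (\<Sum>i<n. (cmod (z i))^2)"
    using assms(1) by (intro member_le_sum[where f="\<lambda>i. (cmod (z i))^2"]) auto
  also have "\<dots> < 1" using assms X by (auto simp: unit_ball_n_def)
  finally have "(cmod (z 0))^2 < 1" .
  then have "cmod (z 0) < 1" by (simp add: abs_square_less_1)
  then show ?thesis by (simp add: unit_disc_def)
qed

theorem mainTheorem1:
  fixes n :: nat and Xn :: "(nat \<Rightarrow> complex) set" and R :: "((nat \<Rightarrow> complex) \<Rightarrow> complex) set"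
  assumes "n \<ge> 1"
    and "Xn = polydisc n \<or> Xn = unit_ball_n n"
    and "subring R (func_ring Xn)"
    and "\<forall>f\<in>R. Umap Xn (Dmap f) \<in> R"
    and "coherent_ring ((func_ring Xn)\<lparr>carrier := R\<rparr>)"
  shows "coherent_ring ((func_ring unit_disc)\<lparr>carrier := Dmap ` R\<rparr>)"
proof -
  let ?A = "(func_ring Xn)\<lparr>carrier := R\<rparr>"
  let ?F = "func_ring unit_disc"
  let ?B = "?F\<lparr>carrier := Dmap ` R\<rparr>"
  have cA: "cring ?A" using assms(5) unfolding coherent_ring_def by blast
  have E: "\<And>w. w \<in> unit_disc \<Longrightarrow> (\<lambda>i. if i = 0 then w else 0) \<in> Xn"
    using e_in[OF assms(1,2)] by blast
  have Z: "\<And>z. z \<in> Xn \<Longrightarrow> z 0 \<in> unit_disc" using z0_in[OF assms(1,2)] by blast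
  have Dhom: "Dmap \<in> ring_hom ?A ?F"
  proof (rule ring_hom_memI)
    fix x assume "x \<in> carrier ?A"
    show "Dmap x \<in> carrier ?F" by (simp add: Dmap_def func_ring_def)
  next
    fix x y assume "x \<in> carrier ?A" "y \<in> carrier ?A"
    show "Dmap (x \<otimes>\<^bsub>?A\<^esub> y) = Dmap x \<otimes>\<^bsub>?F\<^esub> Dmap y"
      by (simp add: func_ring_def Dmap_def fun_eq_iff restrict_def E)
    show "Dmap (x \<oplus>\<^bsub>?A\<^esub> y) = Dmap x \<oplus>\<^bsub>?F\<^esub> Dmap y"
      by (simp add: func_ring_def Dmap_def fun_eq_iff restrict_def E)
  next
    show "Dmap \<one>\<^bsub>?A\<^esub> = \<one>\<^bsub>?F\<^esub>"
      by (simp add: func_ring_def Dmap_def fun_eq_iff restrict_def E)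
  qed
  interpret FD: cring ?F by (rule func_ring_cring)
  interpret cA: cring ?A by (rule cA)
  have Dr: "ring_hom_ring ?A ?F Dmap" by (rule ring_hom_ringI2[OF cA.ring_axioms FD.ring_axioms Dhom])
  have rB: "ring ?B" using ring_hom_ring.img_is_ring[OF Dr] by simp
  have cB: "cring ?B"
  proof -
    interpret rB: ring ?B by (rule rB)
    have "comm_monoid ?B"
    proof (rule comm_monoidI)
      fix x y assume "x \<in> carrier ?B" "y \<in> carrier ?B"
      show "x \<otimes>\<^bsub>?B\<^esub> y = y \<otimes>\<^bsub>?B\<^esub> x"
        by (simp add: func_ring_def fun_eq_iff restrict_def mult.commute)
    qed (fact rB.m_closed rB.one_closed rB.m_assoc rB.l_one)+
    then show ?thesis using rB by (simp add: cring_def)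
  qed
  have hB: "Dmap \<in> ring_hom ?A ?B"
    using Dhom by (auto simp: ring_hom_def)
  have UB: "Umap Xn \<in> ring_hom ?B ?A"
  proof (rule ring_hom_memI)
    fix x assume "x \<in> carrier ?B"
    then show "Umap Xn x \<in> carrier ?A" using assms(4) by auto
  next
    fix x y assume "x \<in> carrier ?B" "y \<in> carrier ?B"
    show "Umap Xn (x \<otimes>\<^bsub>?B\<^esub> y) = Umap Xn x \<otimes>\<^bsub>?A\<^esub> Umap Xn y"
      by (simp add: func_ring_def Umap_def fun_eq_iff restrict_def Z)
    show "Umap Xn (x \<oplus>\<^bsub>?B\<^esub> y) = Umap Xn x \<oplus>\<^bsub>?A\<^esub> Umap Xn y"
      by (simp add: func_ring_def Umap_def fun_eq_iff restrict_def Z)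
  next
    show "Umap Xn \<one>\<^bsub>?B\<^esub> = \<one>\<^bsub>?A\<^esub>"
      by (simp add: func_ring_def Umap_def fun_eq_iff restrict_def Z)
  qed
  have DU: "\<And>b. b \<in> carrier ?B \<Longrightarrow> Dmap (Umap Xn b) = b"
  proof -
    fix b assume "b \<in> carrier ?B"
    then obtain f where "b = Dmap f" by auto
    then show "Dmap (Umap Xn b) = b" by (simp add: Dmap_def Umap_def fun_eq_iff restrict_def E)
  qed
  note X1 = retract_coherent[of ?A ?B Dmap "Umap Xn"]
  note X2 = X1[OF assms(5)]
  note X3 = X2[OF cB]
  note X4 = X3[OF hB]
  note X5 = X4[OF UB]
  show ?thesis by (rule X5) (rule DU)
qed

end
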